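(* There exist smooth real hypersurfaces $M$ in $\mathbb{C}^4$ with $0\in M$ for which $\Delta_2(M,0)<\operatorname{gen.val}_{S\in G^3_0}\Delta_1(M\cap S,0)$. For instance, for $M=\{\operatorname{Re}(z_4)+|z_1^3-z_3z_2|^2+|z_2|^4=0\}$ one has $\Delta_2(M,0)=6$ while the generic value of $\Delta_1(M\cap S,0)$ over $S\in G^3_0$ is $8$.
   Context: For the germ $(M,p)$ of a smooth real hypersurface in $\mathbb{C}^n$, let $r_p$ be a generator of the ideal of germs at $p$ of smooth functions vanishing on $M$. $\Gamma_p$ is the set of non-constant germs of holomorphic maps $z\colon(\mathbb{C},0)\to(\mathbb{C}^n,p)$, $v(z)$ the order of vanishing of $z-p$ at $0$ and $v(r_p\circ z)$ the order of vanishing at $0$ of the smooth function $r_p\circ z$. D'Angelo's 1-type is $\Delta_1(M,p)=\sup_{z\in\Gamma_p}\frac{v(r_p\circ z)}{v(z)}$. For $q\in\{1,\dots,n\}$, let $G^{n-q+1}_p$ be the set of $(n-q+1)$-dimensional complex affine subspaces of $\mathbb{C}^n$ through $p$; $\Delta_q(M,p)=\inf_{S\in G^{n-q+1}_p}\Delta_1(M\cap S,p)$, where $M\cap S$ is regarded as a germ of real hypersurface in $S\cong\mathbb{C}^{n-q+1}$. The generic value over $S\in G^{n-q+1}_p$ of a quantity is the value it takes for all $S$ in some non-empty Zariski open subset of $G^{n-q+1}_p$. *)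

theory Defs
  imports "HOL-Analysis.Analysis" "HOL-Library.Numeral_Type"
begin

text \<open>For smooth g this is the degree of the first non-zero Taylor term.  For a vector-valued
  map we apply it to the norm.\<close>
definition vorder :: "(complex \<Rightarrow> real) \<Rightarrow> enat" where
  "vorder g = Sup {enat k | k. \<exists>C>0. \<exists>e>0. \<forall>t. cmod t < e \<longrightarrow> \<bar>g t\<bar> \<le> C * cmod t ^ k}"

definition Gamma_in :: "(complex^'n::finite) set \<Rightarrow> complex^'n \<Rightarrow> (complex \<Rightarrow> complex^'n) set" where
  "Gamma_in S p = {z. z 0 = p
      \<and> (\<exists>e>0. \<forall>i. (\<lambda>t. z t $ i) holomorphic_on ball 0 e)
      \<and> \<not> (\<forall>\<^sub>F t in nhds 0. z t = p)
      \<and> (\<forall>\<^sub>F t in nhds 0. z t \<in> S)}"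

text \<open>D'Angelo 1-type of the germ at p of M \<inter> S, where M = {r = 0}, r a defining function
  (generator of the ideal), and holomorphic curves are taken inside S.\<close>
definition Delta1_on :: "(complex^'n::finite \<Rightarrow> real) \<Rightarrow> (complex^'n) set \<Rightarrow> complex^'n \<Rightarrow> ereal" where
  "Delta1_on r S p = (SUP z \<in> Gamma_in S p.
       ereal_of_enat (vorder (\<lambda>t. r (z t))) / ereal_of_enat (vorder (\<lambda>t. norm (z t - p))))"

definition Delta1 :: "(complex^'n::finite \<Rightarrow> real) \<Rightarrow> complex^'n \<Rightarrow> ereal" where
  "Delta1 r p = Delta1_on r UNIV p"

definition Gr :: "nat \<Rightarrow> complex^'n::finite \<Rightarrow> (complex^'n) set set" where
  "Gr d p = {(\<lambda>v. p + v) ` V | V. vec.subspace V \<and> vec.dim V = d}"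

definition Delta :: "nat \<Rightarrow> (complex^'n::finite \<Rightarrow> real) \<Rightarrow> complex^'n \<Rightarrow> ereal" where
  "Delta q r p = (INF S \<in> Gr (CARD('n) - q + 1) p. Delta1_on r S p)"

text \<open>Polynomial functions of d-frames F : {..<d} -> C^n (polynomials in the d*n entries).\<close>
definition frame_poly :: "nat \<Rightarrow> ((nat \<Rightarrow> complex^'n::finite) \<Rightarrow> complex) \<Rightarrow> bool" where
  "frame_poly d P \<longleftrightarrow> (\<exists>c :: (nat \<times> 'n \<Rightarrow> nat) \<Rightarrow> complex.
      finite {\<alpha>. c \<alpha> \<noteq> 0}
    \<and> (\<forall>\<alpha>. c \<alpha> \<noteq> 0 \<longrightarrow> (\<forall>i j. d \<le> i \<longrightarrow> \<alpha> (i, j) = 0))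
    \<and> (\<forall>F. P F = (\<Sum>\<alpha>\<in>{\<alpha>. c \<alpha> \<noteq> 0}.
                   c \<alpha> * (\<Prod>ij\<in>{..<d} \<times> UNIV. (F (fst ij) $ snd ij) ^ \<alpha> ij))))"

text \<open>A property Q of elements of Gr d p holds generically, i.e. on a non-empty Zariski open
  subset of Gr d p.  Equivalently (the frame map to the Grassmannian is a surjective open
  morphism from an irreducible variety): there is a non-zero polynomial P in the entries of
  d-frames such that Q holds for p + span F whenever F is a linearly independent d-frame with
  P F \<noteq> 0.\<close>
definition holds_generically :: "nat \<Rightarrow> complex^'n::finite \<Rightarrow> ((complex^'n) set \<Rightarrow> bool) \<Rightarrow> bool" where
  "holds_generically d p Q \<longleftrightarrow> (\<exists>P. frame_poly d P \<and> (\<exists>F. P F \<noteq> 0) \<and>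
      (\<forall>F. P F \<noteq> 0 \<and> inj_on F {..<d} \<and> vec.independent (F ` {..<d})
            \<longrightarrow> Q ((\<lambda>v. p + v) ` vec.span (F ` {..<d}))))"

definition generic_value_is :: "nat \<Rightarrow> complex^'n::finite \<Rightarrow> ((complex^'n) set \<Rightarrow> 'b) \<Rightarrow> 'b \<Rightarrow> bool" where
  "generic_value_is d p f a \<longleftrightarrow> holds_generically d p (\<lambda>S. f S = a)"

definition r_ex :: "complex^4 \<Rightarrow> real" where
  "r_ex z = Re (z$4) + (cmod (z$1 ^ 3 - z$3 * z$2))\<^sup>2 + (cmod (z$2)) ^ 4"

end

theory Submission
  imports Defs "HOL-Complex_Analysis.Complex_Analysis"
begin

definition ordge :: "nat \<Rightarrow> (complex \<Rightarrow> complex) \<Rightarrow> bool" where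
  "ordge k g \<longleftrightarrow> (\<exists>h. isCont h 0 \<and> (\<forall>\<^sub>F t in nhds 0. g t = t^k * h t))"
definition ordx :: "nat \<Rightarrow> (complex \<Rightarrow> complex) \<Rightarrow> bool" where
  "ordx k g \<longleftrightarrow> (\<exists>h. isCont h 0 \<and> h 0 \<noteq> 0 \<and> (\<forall>\<^sub>F t in nhds 0. g t = t^k * h t))"
definition Zr :: "(complex \<Rightarrow> complex) \<Rightarrow> bool" where
  "Zr g \<longleftrightarrow> (\<forall>\<^sub>F t in nhds 0. g t = 0)"

lemma ordx_ordge: "ordx k g \<Longrightarrow> ordge k g"
  unfolding ordx_def ordge_def by blast

lemma ordge_mono: assumes "ordge k g" "j \<le> k" shows "ordge j g"
proof -
  obtain h where h: "isCont h 0" "\<forall>\<^sub>F t in nhds 0. g t = t^k * h t" using assms unfolding ordge_def by blast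
  have "isCont (\<lambda>t. t^(k-j) * h t) 0" using h(1) by (intro continuous_intros)
  moreover have "\<forall>\<^sub>F t in nhds 0. g t = t^j * (t^(k-j) * h t)"
    using h(2) by eventually_elim (use assms(2) in \<open>simp add: mult.assoc[symmetric] power_add[symmetric]\<close>)
  ultimately show ?thesis unfolding ordge_def by blast
qed

lemma Zr_ordge: "Zr g \<Longrightarrow> ordge k g"
  unfolding Zr_def ordge_def by (rule exI[of _ "\<lambda>_. 0"]) auto

lemma ordx_not_ordge: assumes "ordx k g" "ordge (Suc k) g" shows False
proof -
  obtain h1 where h1: "isCont h1 0" "h1 0 \<noteq> 0" "\<forall>\<^sub>F t in nhds 0. g t = t^k * h1 t"
    using assms(1) unfolding ordx_def by blast
  obtain h2 where h2: "isCont h2 0" "\<forall>\<^sub>F t in nhds 0. g t = t^(Suc k) * h2 t"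
    using assms(2) unfolding ordge_def by blast
  have ev: "\<forall>\<^sub>F t in at 0. h1 t = t * h2 t"
    unfolding eventually_at_filter using h1(3) h2(2)
    by eventually_elim auto
  have "((\<lambda>t. t * h2 t) \<longlongrightarrow> 0 * h2 0) (at 0)"
    using h2(1) by (intro tendsto_intros) (auto simp: isCont_def)
  then have "(h1 \<longlongrightarrow> 0) (at 0)"
    using ev by (simp add: tendsto_cong)
  moreover have "(h1 \<longlongrightarrow> h1 0) (at 0)" using h1(1) by (simp add: isCont_def)
  ultimately have "h1 0 = 0" using tendsto_unique[OF at_neq_bot] by blast
  with h1(2) show False by simp
qed

lemma Zr_not_ordx: "Zr g \<Longrightarrow> ordx k g \<Longrightarrow> False"
  using Zr_ordge ordx_not_ordge by blast

lemma ordx_unique: assumes "ordx k g" "ordx l g" shows "k = l"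
proof (rule ccontr)
  assume "k \<noteq> l"
  then consider "k < l" | "l < k" by linarith
  then show False
  proof cases
    case 1 then show ?thesis using ordx_not_ordge[OF assms(1)] ordge_mono[OF ordx_ordge[OF assms(2)]] by auto
  next
    case 2 then show ?thesis using ordx_not_ordge[OF assms(2)] ordge_mono[OF ordx_ordge[OF assms(1)]] by auto
  qed
qed

lemma ordx_cong: assumes "ordx k g" "\<forall>\<^sub>F t in nhds 0. f t = g t" shows "ordx k f"
proof -
  obtain h where h: "isCont h 0" "h 0 \<noteq> 0" "\<forall>\<^sub>F t in nhds 0. g t = t^k * h t"
    using assms(1) unfolding ordx_def by blast
  have "\<forall>\<^sub>F t in nhds 0. f t = t^k * h t" using h(3) assms(2) by eventually_elim simp
  then show ?thesis using h unfolding ordx_def by blast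
qed
lemma ordge_cong: assumes "ordge k g" "\<forall>\<^sub>F t in nhds 0. f t = g t" shows "ordge k f"
proof -
  obtain h where h: "isCont h 0" "\<forall>\<^sub>F t in nhds 0. g t = t^k * h t"
    using assms(1) unfolding ordge_def by blast
  have "\<forall>\<^sub>F t in nhds 0. f t = t^k * h t" using h(2) assms(2) by eventually_elim simp
  then show ?thesis using h unfolding ordge_def by blast
qed

lemma ordx_mult: assumes "ordx k f" "ordx l g" shows "ordx (k+l) (\<lambda>t. f t * g t)"
proof -
  obtain h1 where h1: "isCont h1 0" "h1 0 \<noteq> 0" "\<forall>\<^sub>F t in nhds 0. f t = t^k * h1 t"
    using assms(1) unfolding ordx_def by blast
  obtain h2 where h2: "isCont h2 0" "h2 0 \<noteq> 0" "\<forall>\<^sub>F t in nhds 0. g t = t^l * h2 t"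
    using assms(2) unfolding ordx_def by blast
  have "isCont (\<lambda>t. h1 t * h2 t) 0" using h1 h2 by (intro continuous_intros)
  moreover have "\<forall>\<^sub>F t in nhds 0. f t * g t = t^(k+l) * (h1 t * h2 t)"
    using h1(3) h2(3) by eventually_elim (simp add: power_add algebra_simps)
  ultimately show ?thesis using h1(2) h2(2) unfolding ordx_def by (intro exI[of _ "\<lambda>t. h1 t * h2 t"]) auto
qed

lemma ordge_mult: assumes "ordge k f" "ordge l g" shows "ordge (k+l) (\<lambda>t. f t * g t)"
proof -
  obtain h1 where h1: "isCont h1 0" "\<forall>\<^sub>F t in nhds 0. f t = t^k * h1 t"
    using assms(1) unfolding ordge_def by blast
  obtain h2 where h2: "isCont h2 0" "\<forall>\<^sub>F t in nhds 0. g t = t^l * h2 t"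
    using assms(2) unfolding ordge_def by blast
  have "isCont (\<lambda>t. h1 t * h2 t) 0" using h1 h2 by (intro continuous_intros)
  moreover have "\<forall>\<^sub>F t in nhds 0. f t * g t = t^(k+l) * (h1 t * h2 t)"
    using h1(2) h2(2) by eventually_elim (simp add: power_add algebra_simps)
  ultimately show ?thesis unfolding ordge_def by (intro exI[of _ "\<lambda>t. h1 t * h2 t"]) auto
qed

lemma ordx_cmult: assumes "ordx k f" "c \<noteq> 0" shows "ordx k (\<lambda>t. c * f t)"
proof -
  obtain h1 where h1: "isCont h1 0" "h1 0 \<noteq> 0" "\<forall>\<^sub>F t in nhds 0. f t = t^k * h1 t"
    using assms(1) unfolding ordx_def by blast
  have "isCont (\<lambda>t. c * h1 t) 0" using h1 by (intro continuous_intros)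
  moreover have "\<forall>\<^sub>F t in nhds 0. c * f t = t^k * (c * h1 t)"
    using h1(3) by eventually_elim (simp add: algebra_simps)
  ultimately show ?thesis using h1(2) assms(2) unfolding ordx_def by (intro exI[of _ "\<lambda>t. c * h1 t"]) auto
qed

lemma ordge_cmult: assumes "ordge k f" shows "ordge k (\<lambda>t. c * f t)"
proof -
  obtain h1 where h1: "isCont h1 0" "\<forall>\<^sub>F t in nhds 0. f t = t^k * h1 t"
    using assms(1) unfolding ordge_def by blast
  have "isCont (\<lambda>t. c * h1 t) 0" using h1 by (intro continuous_intros)
  moreover have "\<forall>\<^sub>F t in nhds 0. c * f t = t^k * (c * h1 t)"
    using h1(2) by eventually_elim (simp add: algebra_simps)
  ultimately show ?thesis unfolding ordge_def by (intro exI[of _ "\<lambda>t. c * h1 t"]) auto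
qed

lemma ordge_add: assumes "ordge k f" "ordge k g" shows "ordge k (\<lambda>t. f t + g t)"
proof -
  obtain h1 where h1: "isCont h1 0" "\<forall>\<^sub>F t in nhds 0. f t = t^k * h1 t"
    using assms(1) unfolding ordge_def by blast
  obtain h2 where h2: "isCont h2 0" "\<forall>\<^sub>F t in nhds 0. g t = t^k * h2 t"
    using assms(2) unfolding ordge_def by blast
  have "isCont (\<lambda>t. h1 t + h2 t) 0" using h1 h2 by (intro continuous_intros)
  moreover have "\<forall>\<^sub>F t in nhds 0. f t + g t = t^k * (h1 t + h2 t)"
    using h1(2) h2(2) by eventually_elim (simp add: algebra_simps)
  ultimately show ?thesis unfolding ordge_def by (intro exI[of _ "\<lambda>t. h1 t + h2 t"]) auto
qed

lemma ordx_add: assumes "ordx k f" "ordge (Suc k) g" shows "ordx k (\<lambda>t. f t + g t)"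
proof -
  obtain h1 where h1: "isCont h1 0" "h1 0 \<noteq> 0" "\<forall>\<^sub>F t in nhds 0. f t = t^k * h1 t"
    using assms(1) unfolding ordx_def by blast
  obtain h2 where h2: "isCont h2 0" "\<forall>\<^sub>F t in nhds 0. g t = t^(Suc k) * h2 t"
    using assms(2) unfolding ordge_def by blast
  have "isCont (\<lambda>t. h1 t + t * h2 t) 0" using h1 h2 by (intro continuous_intros)
  moreover have "\<forall>\<^sub>F t in nhds 0. f t + g t = t^k * (h1 t + t * h2 t)"
    using h1(3) h2(2) by eventually_elim (simp add: algebra_simps)
  ultimately show ?thesis using h1(2) unfolding ordx_def by (intro exI[of _ "\<lambda>t. h1 t + t * h2 t"]) auto
qed

lemma ordx_lower: assumes "ordx k g" shows "\<exists>c>0. \<forall>\<^sub>F t in nhds 0. c * cmod t ^ k \<le> cmod (g t)"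
proof -
  obtain h where h: "isCont h 0" "h 0 \<noteq> 0" "\<forall>\<^sub>F t in nhds 0. g t = t^k * h t"
    using assms(1) unfolding ordx_def by blast
  have "(h \<longlongrightarrow> h 0) (nhds 0)" using h(1) tendsto_at_iff_tendsto_nhds isCont_def by blast
  then have "\<forall>\<^sub>F t in nhds 0. dist (h t) (h 0) < cmod (h 0) / 2"
    using h(2) by (intro tendstoD) auto
  then have "\<forall>\<^sub>F t in nhds 0. cmod (h 0) / 2 * cmod t ^ k \<le> cmod (g t)"
    using h(3)
  proof eventually_elim
    case (elim t)
    have "cmod (h 0) \<le> cmod (h t) + cmod (h t - h 0)" using norm_triangle_ineq2[of "h 0" "h t"] norm_minus_commute[of "h 0" "h t"] by linarith
    then have "cmod (h 0) / 2 \<le> cmod (h t)" using elim(1) by (simp add: dist_norm)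
    then have "cmod (h 0) / 2 * cmod t ^ k \<le> cmod (h t) * cmod t ^ k" by (rule mult_right_mono) auto
    then show ?case using elim(2) by (simp add: norm_mult norm_power mult.commute)
  qed
  then show ?thesis using h(2) by (intro exI[of _ "cmod (h 0) / 2"]) auto
qed

lemma ordge_upper: assumes "ordge k g" shows "\<exists>C>0. \<forall>\<^sub>F t in nhds 0. cmod (g t) \<le> C * cmod t ^ k"
proof -
  obtain h where h: "isCont h 0" "\<forall>\<^sub>F t in nhds 0. g t = t^k * h t"
    using assms(1) unfolding ordge_def by blast
  have "(h \<longlongrightarrow> h 0) (nhds 0)" using h(1) tendsto_at_iff_tendsto_nhds isCont_def by blast
  then have "\<forall>\<^sub>F t in nhds 0. dist (h t) (h 0) < 1"
    by (intro tendstoD) auto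
  then have "\<forall>\<^sub>F t in nhds 0. cmod (g t) \<le> (cmod (h 0) + 1) * cmod t ^ k"
    using h(2)
  proof eventually_elim
    case (elim t)
    have "cmod (h t) \<le> cmod (h 0) + cmod (h t - h 0)" using norm_triangle_ineq2[of "h t" "h 0"] by linarith
    then have "cmod (h t) \<le> cmod (h 0) + 1" using elim(1) by (simp add: dist_norm)
    then have "cmod (h t) * cmod t ^ k \<le> (cmod (h 0) + 1) * cmod t ^ k" by (rule mult_right_mono) auto
    then show ?case using elim(2) by (simp add: norm_mult norm_power mult.commute)
  qed
  moreover have "0 < cmod (h 0) + 1" using norm_ge_zero[of "h 0"] by linarith
  ultimately show ?thesis by blast
qed

lemma ordx_pos: assumes "ordx k g" "g 0 = 0" shows "0 < k"
proof (rule ccontr)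
  assume "\<not> 0 < k"
  then have k: "k = 0" by simp
  obtain h where h: "isCont h 0" "h 0 \<noteq> 0" "\<forall>\<^sub>F t in nhds 0. g t = t^k * h t"
    using assms(1) unfolding ordx_def by blast
  have "g 0 = 0^k * h 0" using eventually_nhds_x_imp_x[OF h(3)] .
  then show False using k h(2) assms(2) by simp
qed

lemma holo_factor:
  assumes "e > 0" "g holomorphic_on ball 0 e" "g 0 = 0"
  shows "Zr g \<or> (\<exists>k. ordx k g)"
proof (cases "g constant_on ball 0 e")
  case True
  then have "\<forall>x\<in>ball 0 e. g x = 0" using assms unfolding constant_on_def by (metis centre_in_ball)
  then have "Zr g" unfolding Zr_def eventually_nhds using assms(1) by (intro exI[of _ "ball 0 e"]) auto
  then show ?thesis by blast
next
  case False
  have c0: "0 \<in> ball (0::complex) e" using assms(1) by simp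
  show ?thesis
  proof (rule holomorphic_factor_zero_nonconstant[OF assms(2) open_ball connected_ball c0 assms(3) False])
    fix h r n
    assume hr: "0 < n" "0 < r" "ball 0 r \<subseteq> ball 0 e" "h holomorphic_on ball 0 r"
      "\<And>w. w \<in> ball 0 r \<Longrightarrow> g w = (w - 0)^n * h w" "\<And>w. w \<in> ball 0 r \<Longrightarrow> h w \<noteq> 0"
    have c: "continuous_on (ball 0 r) h" by (rule holomorphic_on_imp_continuous_on[OF hr(4)])
    have "0 \<in> ball (0::complex) r" using hr(2) by simp
    then have "isCont h 0" using c continuous_on_eq_continuous_at[OF open_ball] by blast
    moreover have "\<forall>\<^sub>F t in nhds 0. g t = t^n * h t"
      unfolding eventually_nhds using hr(2,5) by (intro exI[of _ "ball 0 r"]) auto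
    ultimately have "ordx n g" unfolding ordx_def using hr(6) hr(2) by auto
    then show ?thesis by blast
  qed
qed

lemma ray_exists:
  assumes "Zr g \<or> (\<exists>k. ordx k g)" "g 0 = 0"
  shows "\<exists>\<omega> e. cmod \<omega> = 1 \<and> e > 0 \<and> (\<forall>s. 0<s \<and> s<e \<longrightarrow> 0 \<le> Re (g (of_real s * \<omega>)))
     \<and> (\<forall>k. ordx k g \<longrightarrow> (\<exists>c>0. \<forall>s. 0<s \<and> s<e \<longrightarrow> c * s^k \<le> Re (g (of_real s * \<omega>))))"
  using assms(1)
proof
  assume Z: "Zr g"
  then obtain d where d: "d > 0" "\<forall>t. dist t 0 < d \<longrightarrow> g t = 0"
    unfolding Zr_def eventually_nhds_metric by blast
  show ?thesis
    by (rule exI[of _ 1], rule exI[of _ d]) (use d Z Zr_not_ordx in auto)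
next
  assume "\<exists>k. ordx k g"
  then obtain k0 where k0: "ordx k0 g" by blast
  have kpos: "0 < k0" using ordx_pos[OF k0 assms(2)] .
  obtain h where h: "isCont h 0" "h 0 \<noteq> 0" "\<forall>\<^sub>F t in nhds 0. g t = t^k0 * h t"
    using k0 unfolding ordx_def by blast
  define u where "u = cnj (h 0) / of_real (cmod (h 0))"
  have nh: "cmod (h 0) > 0" using h(2) by simp
  have u1: "cmod u = 1" unfolding u_def using nh by (simp add: norm_divide)
  then have u0: "u \<noteq> 0" by auto
  define \<omega> where "\<omega> = exp (Ln u / of_nat k0)"
  have wk: "\<omega> ^ k0 = u"
  proof -
    have "\<omega> ^ k0 = exp (of_nat k0 * (Ln u / of_nat k0))" unfolding \<omega>_def by (rule exp_of_nat_mult[symmetric])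
    also have "\<dots> = exp (Ln u)" using kpos by simp
    also have "\<dots> = u" using u0 by simp
    finally show ?thesis .
  qed
  have w1: "cmod \<omega> = 1"
  proof -
    have "cmod \<omega> = exp (Re (Ln u / of_nat k0))" unfolding \<omega>_def by (rule norm_exp_eq_Re)
    also have "Re (Ln u / of_nat k0) = Re (Ln u) / k0" by (simp add: Re_divide_of_nat)
    also have "Re (Ln u) = 0" using u0 u1 by (simp add: Re_Ln)
    finally show ?thesis by simp
  qed
  have uh: "Re (u * h 0) = cmod (h 0)"
  proof -
    have e1: "cnj (h 0) * h 0 = of_real ((cmod (h 0))^2)"
      using complex_norm_square[of "h 0"] by (simp add: mult.commute)
    have "u * h 0 = (cnj (h 0) * h 0) / of_real (cmod (h 0))" unfolding u_def by simp
    also have "\<dots> = of_real ((cmod (h 0))^2) / of_real (cmod (h 0))" by (simp only: e1)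
    finally have "u * h 0 = of_real ((cmod (h 0))^2) / of_real (cmod (h 0))" .
    also have "\<dots> = of_real (cmod (h 0))" using nh by (simp add: power2_eq_square)
    finally show ?thesis by simp
  qed
  have "(h \<longlongrightarrow> h 0) (nhds 0)" using h(1) tendsto_at_iff_tendsto_nhds isCont_def by blast
  then have "\<forall>\<^sub>F t in nhds 0. dist (h t) (h 0) < cmod (h 0) / 2"
    using nh by (intro tendstoD) auto
  with h(3) have "\<forall>\<^sub>F t in nhds 0. g t = t^k0 * h t \<and> dist (h t) (h 0) < cmod (h 0) / 2"
    by (rule eventually_conj)
  then obtain d where d: "d > 0" "\<forall>t. dist t 0 < d \<longrightarrow> g t = t^k0 * h t \<and> dist (h t) (h 0) < cmod (h 0) / 2"
    unfolding eventually_nhds_metric by blast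
  have key: "cmod (h 0) / 2 * s^k0 \<le> Re (g (of_real s * \<omega>))" if s: "0 < s" "s < d" for s
  proof -
    define t where "t = of_real s * \<omega>"
    have "dist t 0 = s" unfolding t_def using w1 s by (simp add: norm_mult)
    then have gt: "g t = t^k0 * h t" and ht: "dist (h t) (h 0) < cmod (h 0) / 2" using d s by auto
    have tk: "t^k0 = of_real (s^k0) * u" unfolding t_def using wk by (simp add: power_mult_distrib)
    have "g t = of_real (s^k0) * (u * h t)" unfolding gt tk by simp
    then have Rg: "Re (g t) = s^k0 * Re (u * h t)" by simp
    have "Re (u * h t) = Re (u * h 0) + Re (u * (h t - h 0))" by (simp add: algebra_simps)
    moreover have "\<bar>Re (u * (h t - h 0))\<bar> \<le> cmod (u * (h t - h 0))" by (rule abs_Re_le_cmod)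
    moreover have "cmod (u * (h t - h 0)) = dist (h t) (h 0)" using u1 by (simp add: norm_mult dist_norm)
    ultimately have "Re (u * h t) \<ge> cmod (h 0) / 2" using uh ht by linarith
    then have "s^k0 * (cmod (h 0) / 2) \<le> s^k0 * Re (u * h t)" using s by (intro mult_left_mono) auto
    then show ?thesis using Rg unfolding t_def by (simp add: mult.commute)
  qed
  have A: "\<forall>s. 0<s \<and> s<d \<longrightarrow> 0 \<le> Re (g (of_real s * \<omega>))"
  proof (intro allI impI)
    fix s :: real assume "0 < s \<and> s < d"
    then have "cmod (h 0) / 2 * s ^ k0 \<le> Re (g (of_real s * \<omega>))" using key[of s] by blast
    moreover have "0 \<le> cmod (h 0) / 2 * s ^ k0" using \<open>0 < s \<and> s < d\<close> nh by simp
    ultimately show "0 \<le> Re (g (of_real s * \<omega>))" by linarith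
  qed
  have B: "\<forall>k. ordx k g \<longrightarrow> (\<exists>c>0. \<forall>s. 0<s \<and> s<d \<longrightarrow> c * s^k \<le> Re (g (of_real s * \<omega>)))"
  proof (intro allI impI)
    fix k assume "ordx k g"
    then have "k = k0" using ordx_unique k0 by blast
    then show "\<exists>c>0. \<forall>s. 0 < s \<and> s < d \<longrightarrow> c * s ^ k \<le> Re (g (of_real s * \<omega>))"
      using key nh by (intro exI[of _ "cmod (h 0) / 2"]) auto
  qed
  show ?thesis using w1 d(1) A B by blast
qed

lemma vorder_ge:
  assumes "C > 0" "\<forall>\<^sub>F t in nhds 0. \<bar>g t\<bar> \<le> C * cmod t ^ k"
  shows "enat k \<le> vorder g"
proof -
  obtain e where e: "e > 0" "\<forall>t. dist t 0 < e \<longrightarrow> \<bar>g t\<bar> \<le> C * cmod t ^ k"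
    using assms(2) unfolding eventually_nhds_metric by blast
  have "enat k \<in> {enat k | k. \<exists>C>0. \<exists>e>0. \<forall>t. cmod t < e \<longrightarrow> \<bar>g t\<bar> \<le> C * cmod t ^ k}"
    using assms(1) e by (auto simp: dist_norm)
  then show ?thesis unfolding vorder_def by (rule Sup_upper)
qed

lemma vorder_le:
  assumes "cmod \<omega> = 1" "c > 0" "e > 0" "\<forall>s. 0<s \<and> s<e \<longrightarrow> c * s^k \<le> \<bar>g (of_real s * \<omega>)\<bar>"
  shows "vorder g \<le> enat k"
  unfolding vorder_def
proof (rule Sup_least)
  fix x assume "x \<in> {enat k | k. \<exists>C>0. \<exists>e>0. \<forall>t. cmod t < e \<longrightarrow> \<bar>g t\<bar> \<le> C * cmod t ^ k}"
  then obtain j C e' where x: "x = enat j" "C > 0" "e' > 0" "\<forall>t. cmod t < e' \<longrightarrow> \<bar>g t\<bar> \<le> C * cmod t ^ j"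
    by blast
  show "x \<le> enat k"
  proof (rule ccontr)
    assume "\<not> x \<le> enat k"
    then have jk: "Suc k \<le> j" using x(1) by simp
    define s where "s = min (min e e') (min 1 (c / C)) / 2"
    have cC: "c / C > 0" using assms(2) x(2) by simp
    have m: "min (min e e') (min 1 (c / C)) \<le> c / C" "min (min e e') (min 1 (c / C)) \<le> e"
      "min (min e e') (min 1 (c / C)) \<le> e'" "min (min e e') (min 1 (c / C)) \<le> 1"
      "min (min e e') (min 1 (c / C)) > 0" using cC assms(3) x(3) by auto
    have s: "0 < s" "s < e" "s < e'" "s < 1" "s < c / C"
      unfolding s_def using m by linarith+
    have "c * s^k \<le> \<bar>g (of_real s * \<omega>)\<bar>" using assms(4) s by auto
    also have cs: "cmod (of_real s * \<omega>) = s" using assms(1) s by (simp add: norm_mult)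
    have "\<bar>g (of_real s * \<omega>)\<bar> \<le> C * cmod (of_real s * \<omega>) ^ j" using x(4)[rule_format, of "of_real s * \<omega>"] cs s by simp
    also have "\<dots> = C * s ^ j" using cs by simp
    also have "\<dots> \<le> C * s ^ Suc k" using s jk x(2) by (intro mult_left_mono power_decreasing) auto
    also have "\<dots> = (C * s) * s^k" by simp
    also have "\<dots> < c * s^k" using s x(2) by (intro mult_strict_right_mono) (auto simp: field_simps)
    finally show False by simp
  qed
qed

lemma vorder_inf:
  assumes "\<forall>\<^sub>F t in nhds 0. g t = 0"
  shows "vorder g = \<infinity>"
proof -
  have "enat k \<le> vorder g" for k
    by (rule vorder_ge[of 1]) (use assms in \<open>auto elim: eventually_mono\<close>)
  then show ?thesis by (cases "vorder g") (auto, metis Suc_n_not_le_n enat_ord_simps(1))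
qed

lemma ratio_le:
  assumes "N \<le> enat (c * m)" "enat m \<le> D" "0 < m"
  shows "ereal_of_enat N / ereal_of_enat D \<le> ereal (real c)"
proof -
  obtain n where n: "N = enat n" "n \<le> c * m" using assms(1) by (cases N) auto
  show ?thesis
  proof (cases D)
    case infinity
    then show ?thesis using n by simp
  next
    case (enat d)
    then have d: "m \<le> d" "0 < d" using assms(2,3) by auto
    have "real n \<le> real c * real d"
      using n(2) d(1) by (metis of_nat_le_iff of_nat_mult order_trans mult_le_mono2)
    then have "real n / real d \<le> real c" using d(2) by (simp add: divide_le_eq)
    then show ?thesis using n enat d by (simp add: ereal_divide)
  qed
qed

lemma ratio_ge:
  assumes "enat c \<le> N" "D = enat 1"
  shows "ereal (real c) \<le> ereal_of_enat N / ereal_of_enat D"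
  using assms by (cases N) (auto simp: one_ereal_def[symmetric])

lemma curve_basic:
  fixes z :: "complex \<Rightarrow> complex^'n::finite"
  assumes "z \<in> Gamma_in S 0"
  shows "\<exists>m>0. (\<forall>i. ordge m (\<lambda>t. z t $ i)) \<and> (\<exists>i. ordx m (\<lambda>t. z t $ i))
     \<and> (\<forall>i k. ordx k (\<lambda>t. z t $ i) \<longrightarrow> m \<le> k)
     \<and> (\<forall>i. Zr (\<lambda>t. z t $ i) \<or> (\<exists>k. ordx k (\<lambda>t. z t $ i))) \<and> (\<forall>i. z 0 $ i = 0)"
proof -
  from assms obtain e where z0: "z 0 = 0" and e: "e > 0" "\<forall>i. (\<lambda>t. z t $ i) holomorphic_on ball 0 e"
    and nc: "\<not> (\<forall>\<^sub>F t in nhds 0. z t = 0)"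
    unfolding Gamma_in_def by blast
  have comp0: "\<forall>i. z 0 $ i = 0" using z0 by simp
  have alt: "\<forall>i. Zr (\<lambda>t. z t $ i) \<or> (\<exists>k. ordx k (\<lambda>t. z t $ i))"
    using holo_factor[OF e(1)] e(2) comp0 by blast
  have "\<exists>i k. ordx k (\<lambda>t. z t $ i)"
  proof (rule ccontr)
    assume "\<not> ?thesis"
    then have "\<forall>i. Zr (\<lambda>t. z t $ i)" using alt by blast
    then have "\<forall>\<^sub>F t in nhds 0. \<forall>i. z t $ i = 0" unfolding Zr_def by (intro eventually_all_finite) auto
    then have "\<forall>\<^sub>F t in nhds 0. z t = 0" by (rule eventually_mono) (simp add: vec_eq_iff)
    with nc show False by blast
  qed
  then have ex: "\<exists>k. \<exists>i. ordx k (\<lambda>t. z t $ i)" by blast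
  define m where "m = (LEAST k. \<exists>i. ordx k (\<lambda>t. z t $ i))"
  have m1: "\<exists>i. ordx m (\<lambda>t. z t $ i)" unfolding m_def by (rule LeastI_ex[OF ex])
  have m2: "\<forall>i k. ordx k (\<lambda>t. z t $ i) \<longrightarrow> m \<le> k" unfolding m_def by (auto intro: Least_le)
  have mpos: "m > 0" using m1 ordx_pos comp0 by blast
  have m3: "\<forall>i. ordge m (\<lambda>t. z t $ i)"
  proof
    fix i
    show "ordge m (\<lambda>t. z t $ i)"
      using alt[rule_format, of i]
    proof
      assume "Zr (\<lambda>t. z t $ i)" then show ?thesis by (rule Zr_ordge)
    next
      assume "\<exists>k. ordx k (\<lambda>t. z t $ i)"
      then obtain k where "ordx k (\<lambda>t. z t $ i)" by blast
      then show ?thesis using m2 ordge_mono ordx_ordge by blast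
    qed
  qed
  show ?thesis using mpos m1 m2 m3 alt comp0 by blast
qed

lemma curve_denominator:
  fixes z :: "complex \<Rightarrow> complex^'n::finite"
  assumes "\<forall>i. ordge m (\<lambda>t. z t $ i)"
  shows "enat m \<le> vorder (\<lambda>t. norm (z t - 0))"
proof -
  have "\<forall>i. \<exists>C>0. \<forall>\<^sub>F t in nhds 0. cmod (z t $ i) \<le> C * cmod t ^ m"
    using assms ordge_upper by blast
  then obtain C where C: "\<And>i. C i > 0" "\<And>i. \<forall>\<^sub>F t in nhds 0. cmod (z t $ i) \<le> C i * cmod t ^ m"
    by metis
  have ev: "\<forall>\<^sub>F t in nhds 0. \<forall>i. cmod (z t $ i) \<le> C i * cmod t ^ m"
    using C(2) by (intro eventually_all_finite) auto
  have pos: "(\<Sum>i\<in>UNIV. C i) > 0" using C(1) by (intro sum_pos) auto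
  show ?thesis
  proof (rule vorder_ge[OF pos])
    show "\<forall>\<^sub>F t in nhds 0. \<bar>norm (z t - 0)\<bar> \<le> (\<Sum>i\<in>UNIV. C i) * cmod t ^ m"
      using ev
    proof eventually_elim
      case (elim t)
      have "norm (z t) \<le> (\<Sum>i\<in>UNIV. cmod (z t $ i))"
        unfolding norm_vec_def by (rule L2_set_le_sum) auto
      also have "\<dots> \<le> (\<Sum>i\<in>UNIV. C i * cmod t ^ m)" using elim by (intro sum_mono) auto
      also have "\<dots> = (\<Sum>i\<in>UNIV. C i) * cmod t ^ m" by (simp add: sum_distrib_right)
      finally show ?case by simp
    qed
  qed
qed

lemma ray_lower:
  assumes "ordx k q" "cmod \<omega> = 1"
  shows "\<exists>c>0. \<exists>e>0. \<forall>s. 0<s \<and> s<e \<longrightarrow> c * s^(k*p) \<le> cmod (q (of_real s * \<omega>)) ^ p"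
proof -
  obtain c where c: "c > 0" "\<forall>\<^sub>F t in nhds 0. c * cmod t ^ k \<le> cmod (q t)"
    using ordx_lower[OF assms(1)] by blast
  then obtain e where e: "e > 0" "\<forall>t. dist t 0 < e \<longrightarrow> c * cmod t ^ k \<le> cmod (q t)"
    unfolding eventually_nhds_metric by blast
  have "c^p * s^(k*p) \<le> cmod (q (of_real s * \<omega>)) ^ p" if s: "0 < s" "s < e" for s
  proof -
    have n: "cmod (of_real s * \<omega>) = s" using assms(2) s by (simp add: norm_mult)
    then have "c * s^k \<le> cmod (q (of_real s * \<omega>))" using e(2)[rule_format, of "of_real s * \<omega>"] s by simp
    then have "(c * s^k)^p \<le> cmod (q (of_real s * \<omega>)) ^ p" using c(1) s by (intro power_mono) auto
    then show ?thesis by (simp add: power_mult_distrib power_mult)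
  qed
  then show ?thesis using c(1) e(1) by (intro exI[of _ "c^p"] exI[of _ e]) auto
qed

lemma final_bound:
  fixes R Q :: "real \<Rightarrow> real"
  assumes "e0 > 0" "\<forall>s. 0<s \<and> s<e0 \<longrightarrow> Q s \<le> R s"
    "\<exists>c>0. \<exists>e>0. \<forall>s. 0<s \<and> s<e \<longrightarrow> c * s^K \<le> Q s" "K \<le> N"
  shows "\<exists>c>0. \<exists>e>0. \<forall>s. 0<s \<and> s<e \<longrightarrow> c * s^N \<le> \<bar>R s\<bar>"
proof -
  obtain c e where ce: "c > 0" "e > 0" "\<forall>s. 0<s \<and> s<e \<longrightarrow> c * s^K \<le> Q s" using assms(3) by blast
  have "c * s^N \<le> \<bar>R s\<bar>" if s: "0 < s" "s < min e0 (min e 1)" for s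
  proof -
    have "c * s^N \<le> c * s^K" using s ce(1) assms(4) by (intro mult_left_mono power_decreasing) auto
    also have "\<dots> \<le> Q s" using ce(3) s by auto
    also have "\<dots> \<le> R s" using assms(2) s by auto
    finally show ?thesis by simp
  qed
  then have H: "\<forall>s. 0<s \<and> s<min e0 (min e 1) \<longrightarrow> c * s^N \<le> \<bar>R s\<bar>" by blast
  moreover have "min e0 (min e 1) > 0" using ce assms(1) by simp
  ultimately show ?thesis using ce(1) by blast
qed

lemma ratio_from_bounds:
  fixes z :: "complex \<Rightarrow> complex^'n::finite"
  assumes "m > 0" "\<forall>i. ordge m (\<lambda>t. z t $ i)" "cmod \<omega> = 1"
    "\<exists>c>0. \<exists>e>0. \<forall>s. 0<s \<and> s<e \<longrightarrow> c * s^(N*m) \<le> \<bar>r (z (of_real s * \<omega>))\<bar>"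
  shows "ereal_of_enat (vorder (\<lambda>t. r (z t))) / ereal_of_enat (vorder (\<lambda>t. norm (z t - 0))) \<le> ereal (real N)"
proof -
  obtain c e where ce: "c > 0" "e > 0" "\<forall>s. 0<s \<and> s<e \<longrightarrow> c * s^(N*m) \<le> \<bar>r (z (of_real s * \<omega>))\<bar>"
    using assms(4) by blast
  have "vorder (\<lambda>t. r (z t)) \<le> enat (N*m)" by (rule vorder_le[OF assms(3) ce(1) ce(2)]) (use ce(3) in auto)
  moreover have "enat m \<le> vorder (\<lambda>t. norm (z t - 0))" by (rule curve_denominator[OF assms(2)])
  ultimately show ?thesis using ratio_le assms(1) by blast
qed

lemma R_ge:
  fixes w :: "complex^4"
  assumes "0 \<le> Re (w$4)"
  shows "Re (w$4) \<le> r_ex w" "cmod (w$1^3 - w$3 * w$2)^2 \<le> r_ex w" "cmod (w$2)^4 \<le> r_ex w"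
  using assms unfolding r_ex_def by (auto simp: add_nonneg_nonneg)

lemma not_ordx_ordge:
  assumes "Zr g \<or> (\<exists>k. ordx k g)" "\<forall>k. ordx k g \<longrightarrow> m \<le> k" "\<not> ordx m g"
  shows "ordge (Suc m) g"
  using assms(1)
proof
  assume "Zr g" then show ?thesis by (rule Zr_ordge)
next
  assume "\<exists>k. ordx k g"
  then obtain k where k: "ordx k g" by blast
  then have "m \<le> k" "k \<noteq> m" using assms(2,3) by auto
  then show ?thesis using ordge_mono[OF ordx_ordge[OF k]] by simp
qed

lemma cube_ordx:
  assumes "ordx m g" shows "ordx (m+m+m) (\<lambda>t. g t * g t * g t)"
  using ordx_mult[OF ordx_mult[OF assms assms] assms] by simp

lemma ub_S0:
  fixes z :: "complex \<Rightarrow> complex^4"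
  assumes "z \<in> Gamma_in S 0" "\<forall>\<^sub>F t in nhds 0. z t $ 3 = 0"
  shows "ereal_of_enat (vorder (\<lambda>t. r_ex (z t))) / ereal_of_enat (vorder (\<lambda>t. norm (z t - 0))) \<le> ereal (real 6)"
proof -
  obtain m where mpos: "m > 0" and ge: "\<forall>i. ordge m (\<lambda>t. z t $ i)" and ex: "\<exists>i. ordx m (\<lambda>t. z t $ i)"
    and alt: "\<forall>i. Zr (\<lambda>t. z t $ i) \<or> (\<exists>k. ordx k (\<lambda>t. z t $ i))" and c0: "\<forall>i. z 0 $ i = 0"
    using curve_basic[OF assms(1)] by blast
  obtain \<omega> e0 where w: "cmod \<omega> = 1" "e0 > 0" "\<forall>s. 0<s \<and> s<e0 \<longrightarrow> 0 \<le> Re (z (of_real s * \<omega>) $ 4)"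
    and B: "\<forall>k. ordx k (\<lambda>t. z t $ 4) \<longrightarrow> (\<exists>c>0. \<forall>s. 0<s \<and> s<e0 \<longrightarrow> c * s^k \<le> Re (z (of_real s * \<omega>) $ 4))"
    using ray_exists[of "\<lambda>t. z t $ 4"] alt c0 by blast
  define R where "R s = r_ex (z (of_real s * \<omega>))" for s
  have Rg: "\<forall>s. 0<s \<and> s<e0 \<longrightarrow> Re (z (of_real s * \<omega>) $ 4) \<le> R s"
    "\<forall>s. 0<s \<and> s<e0 \<longrightarrow> cmod (z (of_real s * \<omega>) $ 1^3 - z (of_real s * \<omega>) $ 3 * z (of_real s * \<omega>) $ 2)^2 \<le> R s"
    "\<forall>s. 0<s \<and> s<e0 \<longrightarrow> cmod (z (of_real s * \<omega>) $ 2)^4 \<le> R s"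
    unfolding R_def using R_ge w(3) by blast+
  have Z3: "Zr (\<lambda>t. z t $ 3)" using assms(2) unfolding Zr_def .
  obtain i0 where i0: "ordx m (\<lambda>t. z t $ i0)" using ex by blast
  have "\<exists>c>0. \<exists>e>0. \<forall>s. 0<s \<and> s<e \<longrightarrow> c * s^(6*m) \<le> \<bar>R s\<bar>"
  proof -
    consider "i0 = 1" | "i0 = 2" | "i0 = 3" | "i0 = 4" using exhaust_4 by blast
    then show ?thesis
    proof cases
      case 1
      have o3: "ordx (m+m+m) (\<lambda>t. z t $ 1 * z t $ 1 * z t $ 1)" using cube_ordx i0 1 by simp
      have "ordx (m+m+m) (\<lambda>t. z t $ 1^3 - z t $ 3 * z t $ 2)"
        by (rule ordx_cong[OF o3]) (use assms(2) in \<open>auto elim: eventually_mono simp: power3_eq_cube\<close>)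
      from ray_lower[OF this w(1), of 2] show ?thesis
        by (intro final_bound[OF w(2) Rg(2)]) auto
    next
      case 2
      from ray_lower[OF i0[unfolded 2] w(1), of 4] show ?thesis
        by (intro final_bound[OF w(2) Rg(3)]) auto
    next
      case 3
      then show ?thesis using Z3 i0 Zr_not_ordx by blast
    next
      case 4
      then obtain c where "c > 0" "\<forall>s. 0<s \<and> s<e0 \<longrightarrow> c * s^m \<le> Re (z (of_real s * \<omega>) $ 4)"
        using B i0 by blast
      then have "\<exists>c>0. \<exists>e>0. \<forall>s. 0<s \<and> s<e \<longrightarrow> c * s^m \<le> Re (z (of_real s * \<omega>) $ 4)"
        using w(2) by blast
      then show ?thesis by (intro final_bound[OF w(2) Rg(1)]) auto
    qed
  qed
  then have "\<exists>c>0. \<exists>e>0. \<forall>s. 0<s \<and> s<e \<longrightarrow> c * s^(6*m) \<le> \<bar>r_ex (z (of_real s * \<omega>))\<bar>"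
    unfolding R_def .
  then show ?thesis by (rule ratio_from_bounds[OF mpos ge w(1)])
qed

lemma ub_gen:
  fixes z :: "complex \<Rightarrow> complex^4"
  assumes "z \<in> Gamma_in S 0"
    "\<forall>\<^sub>F t in nhds 0. a1 * z t $ 1 + a2 * z t $ 2 + a3 * z t $ 3 + a4 * z t $ 4 = 0"
    "a1 \<noteq> 0" "a3 \<noteq> 0"
  shows "ereal_of_enat (vorder (\<lambda>t. r_ex (z t))) / ereal_of_enat (vorder (\<lambda>t. norm (z t - 0))) \<le> ereal (real 8)"
proof -
  obtain m where mpos: "m > 0" and ge: "\<forall>i. ordge m (\<lambda>t. z t $ i)" and ex: "\<exists>i. ordx m (\<lambda>t. z t $ i)"
    and least: "\<forall>i k. ordx k (\<lambda>t. z t $ i) \<longrightarrow> m \<le> k"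
    and alt: "\<forall>i. Zr (\<lambda>t. z t $ i) \<or> (\<exists>k. ordx k (\<lambda>t. z t $ i))" and c0: "\<forall>i. z 0 $ i = 0"
    using curve_basic[OF assms(1)] by blast
  obtain \<omega> e0 where w: "cmod \<omega> = 1" "e0 > 0" "\<forall>s. 0<s \<and> s<e0 \<longrightarrow> 0 \<le> Re (z (of_real s * \<omega>) $ 4)"
    and B: "\<forall>k. ordx k (\<lambda>t. z t $ 4) \<longrightarrow> (\<exists>c>0. \<forall>s. 0<s \<and> s<e0 \<longrightarrow> c * s^k \<le> Re (z (of_real s * \<omega>) $ 4))"
    using ray_exists[of "\<lambda>t. z t $ 4"] alt c0 by blast
  define R where "R s = r_ex (z (of_real s * \<omega>))" for s
  have Rg: "\<forall>s. 0<s \<and> s<e0 \<longrightarrow> Re (z (of_real s * \<omega>) $ 4) \<le> R s"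
    "\<forall>s. 0<s \<and> s<e0 \<longrightarrow> cmod (z (of_real s * \<omega>) $ 1^3 - z (of_real s * \<omega>) $ 3 * z (of_real s * \<omega>) $ 2)^2 \<le> R s"
    "\<forall>s. 0<s \<and> s<e0 \<longrightarrow> cmod (z (of_real s * \<omega>) $ 2)^4 \<le> R s"
    unfolding R_def using R_ge w(3) by blast+
  have rel3: "\<forall>\<^sub>F t in nhds 0. z t $ 3 = (- a1 / a3) * z t $ 1 + ((- a2 / a3) * z t $ 2 + (- a4 / a3) * z t $ 4)"
    using assms(2) by eventually_elim (use assms(4) in \<open>simp add: field_simps, algebra\<close>)
  have fcube: "\<forall>\<^sub>F t in nhds 0. z t $ 1^3 - z t $ 3 * z t $ 2 = z t $ 1 * z t $ 1 * z t $ 1 + (-1) * (z t $ 3 * z t $ 2)"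
    by (intro always_eventually allI) (simp add: power3_eq_cube)
  have fcube2: "\<forall>\<^sub>F t in nhds 0. z t $ 1^3 - z t $ 3 * z t $ 2 = (-1) * (z t $ 3 * z t $ 2) + z t $ 1 * z t $ 1 * z t $ 1"
    by (intro always_eventually allI) (simp add: power3_eq_cube)
  obtain i0 where i0: "ordx m (\<lambda>t. z t $ i0)" using ex by blast
  have "\<exists>c>0. \<exists>e>0. \<forall>s. 0<s \<and> s<e \<longrightarrow> c * s^(8*m) \<le> \<bar>R s\<bar>"
  proof (cases "ordx m (\<lambda>t. z t $ 4)")
    case True
    then obtain c where "c > 0" "\<forall>s. 0<s \<and> s<e0 \<longrightarrow> c * s^m \<le> Re (z (of_real s * \<omega>) $ 4)"
      using B by blast
    then have "\<exists>c>0. \<exists>e>0. \<forall>s. 0<s \<and> s<e \<longrightarrow> c * s^m \<le> Re (z (of_real s * \<omega>) $ 4)"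
      using w(2) by blast
    then show ?thesis by (intro final_bound[OF w(2) Rg(1)]) auto
  next
    case n4: False
    show ?thesis
    proof (cases "ordx m (\<lambda>t. z t $ 2)")
      case True
      from ray_lower[OF True w(1), of 4] show ?thesis
        by (intro final_bound[OF w(2) Rg(3)]) auto
    next
      case n2: False
      have g4: "ordge (Suc m) (\<lambda>t. z t $ 4)" using not_ordx_ordge alt least n4 by blast
      have g2: "ordge (Suc m) (\<lambda>t. z t $ 2)" using not_ordx_ordge alt least n2 by blast
      have o1: "ordx m (\<lambda>t. z t $ 1)"
      proof (rule ccontr)
        assume n1: "\<not> ?thesis"
        have g1: "ordge (Suc m) (\<lambda>t. z t $ 1)" using not_ordx_ordge alt least n1 by blast
        have "ordge (Suc m) (\<lambda>t. (- a1 / a3) * z t $ 1 + ((- a2 / a3) * z t $ 2 + (- a4 / a3) * z t $ 4))"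
          by (intro ordge_add ordge_cmult g1 g2 g4)
        then have g3: "ordge (Suc m) (\<lambda>t. z t $ 3)" using rel3 by (rule ordge_cong)
        consider "i0 = 1" | "i0 = 2" | "i0 = 3" | "i0 = 4" using exhaust_4 by blast
        then show False
          by cases (use i0 g1 g2 g3 g4 ordx_not_ordge in blast)+
      qed
      have "ordx m (\<lambda>t. (- a1 / a3) * z t $ 1 + ((- a2 / a3) * z t $ 2 + (- a4 / a3) * z t $ 4))"
        by (intro ordx_add ordx_cmult o1 ordge_add ordge_cmult g2 g4) (use assms(3,4) in simp)
      then have o3: "ordx m (\<lambda>t. z t $ 3)" using rel3 by (rule ordx_cong)
      have c1: "ordx (m+m+m) (\<lambda>t. z t $ 1 * z t $ 1 * z t $ 1)" by (rule cube_ordx[OF o1])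
      show ?thesis
      proof (cases "\<exists>k. ordx k (\<lambda>t. z t $ 2) \<and> k \<le> 2*m")
        case True
        then obtain k2 where k2: "ordx k2 (\<lambda>t. z t $ 2)" "k2 \<le> 2*m" by blast
        have "m \<le> k2" "k2 \<noteq> m" using least k2 n2 by auto
        then have k2m: "Suc m \<le> k2" by simp
        show ?thesis
        proof (cases "k2 = 2*m")
          case True
          from ray_lower[OF k2(1) w(1), of 4] show ?thesis
            by (intro final_bound[OF w(2) Rg(3)]) (use True in auto)
        next
          case False
          then have k2l: "k2 < 2*m" using k2 by simp
          have p: "ordx (m + k2) (\<lambda>t. z t $ 3 * z t $ 2)" by (rule ordx_mult[OF o3 k2(1)])
          have q: "ordge (Suc (m + k2)) (\<lambda>t. z t $ 1 * z t $ 1 * z t $ 1)"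
            by (rule ordge_mono[OF ordx_ordge[OF c1]]) (use k2l in simp)
          have "ordx (m + k2) (\<lambda>t. (-1) * (z t $ 3 * z t $ 2) + z t $ 1 * z t $ 1 * z t $ 1)"
            by (rule ordx_add[OF ordx_cmult[OF p] q]) simp
          then have "ordx (m + k2) (\<lambda>t. z t $ 1^3 - z t $ 3 * z t $ 2)" using fcube2 by (rule ordx_cong)
          from ray_lower[OF this w(1), of 2] show ?thesis
            by (intro final_bound[OF w(2) Rg(2)]) (use k2l in auto)
        qed
      next
        case False
        have g2b: "ordge (Suc (2*m)) (\<lambda>t. z t $ 2)"
          using alt[rule_format, of 2]
        proof
          assume "Zr (\<lambda>t. z t $ 2)" then show ?thesis by (rule Zr_ordge)
        next
          assume "\<exists>k. ordx k (\<lambda>t. z t $ 2)"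
          then obtain k where k: "ordx k (\<lambda>t. z t $ 2)" by blast
          then have "Suc (2*m) \<le> k" using False by (metis not_less_eq_eq)
          then show ?thesis using ordge_mono[OF ordx_ordge[OF k]] by blast
        qed
        have p: "ordge (m + Suc (2*m)) (\<lambda>t. z t $ 3 * z t $ 2)" by (rule ordge_mult[OF ordx_ordge[OF o3] g2b])
        have q: "ordge (Suc (m+m+m)) (\<lambda>t. (-1) * (z t $ 3 * z t $ 2))"
          by (rule ordge_mono[OF ordge_cmult[OF p]]) simp
        have "ordx (m+m+m) (\<lambda>t. z t $ 1 * z t $ 1 * z t $ 1 + (-1) * (z t $ 3 * z t $ 2))"
          by (rule ordx_add[OF c1 q])
        then have "ordx (m+m+m) (\<lambda>t. z t $ 1^3 - z t $ 3 * z t $ 2)" using fcube by (rule ordx_cong)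
        from ray_lower[OF this w(1), of 2] show ?thesis
          by (intro final_bound[OF w(2) Rg(2)]) auto
      qed
    qed
  qed
  then have "\<exists>c>0. \<exists>e>0. \<forall>s. 0<s \<and> s<e \<longrightarrow> c * s^(8*m) \<le> \<bar>r_ex (z (of_real s * \<omega>))\<bar>"
    unfolding R_def .
  then show ?thesis by (rule ratio_from_bounds[OF mpos ge w(1)])
qed

lemma den_one:
  fixes z :: "complex \<Rightarrow> complex^'n::finite"
  assumes "a > 0" "\<forall>t. a * cmod t \<le> norm (z t)" "C > 0" "\<forall>\<^sub>F t in nhds 0. norm (z t) \<le> C * cmod t"
  shows "vorder (\<lambda>t. norm (z t - 0)) = enat 1"
proof (rule antisym)
  show "vorder (\<lambda>t. norm (z t - 0)) \<le> enat 1"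
  proof (rule vorder_le[of 1 a 1])
    show "\<forall>s. 0 < s \<and> s < 1 \<longrightarrow> a * s ^ 1 \<le> \<bar>norm (z (complex_of_real s * 1) - 0)\<bar>"
    proof (intro allI impI)
      fix s :: real assume s: "0 < s \<and> s < 1"
      have "a * cmod (of_real s) \<le> norm (z (of_real s))" using assms(2) by blast
      then show "a * s ^ 1 \<le> \<bar>norm (z (complex_of_real s * 1) - 0)\<bar>" using s by simp
    qed
  qed (use assms(1) in auto)
  show "enat 1 \<le> vorder (\<lambda>t. norm (z t - 0))"
    by (rule vorder_ge[OF assms(3)]) (use assms(4) in \<open>auto elim: eventually_mono\<close>)
qed

lemma lb_main:
  fixes u v :: "complex^4"
  assumes "vec.subspace S" "u \<in> S" "v \<in> S" "a > 0" "\<forall>t. a * cmod t \<le> norm (t *s u + t^2 *s v)"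
    "C > 0" "\<forall>\<^sub>F t in nhds 0. \<bar>r_ex (t *s u + t^2 *s v)\<bar> \<le> C * cmod t ^ N"
  shows "ereal (real N) \<le> Delta1_on r_ex S 0"
proof -
  define z where "z t = t *s u + t^2 *s v" for t
  have hol: "(\<lambda>t. z t $ i) holomorphic_on ball 0 1" for i
    unfolding z_def by (simp add: holomorphic_intros)
  have nz: "\<not> (\<forall>\<^sub>F t in nhds 0. z t = 0)"
  proof
    assume "\<forall>\<^sub>F t in nhds 0. z t = 0"
    then obtain d where d: "d > 0" "\<forall>t. dist t 0 < d \<longrightarrow> z t = 0" unfolding eventually_nhds_metric by blast
    define t where "t = complex_of_real (d/2)"
    have "dist t 0 < d" "t \<noteq> 0" using d(1) unfolding t_def by (auto simp: dist_norm)
    then have "z t = 0" "a * cmod t > 0" using d(2) assms(4) by auto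
    then show False using assms(5)[rule_format, of t] unfolding z_def by simp
  qed
  have inS: "z t \<in> S" for t
    unfolding z_def using assms(1-3) by (intro vec.subspace_add vec.subspace_scale) auto
  have G: "z \<in> Gamma_in S 0"
    unfolding Gamma_in_def using hol nz inS by (auto simp: z_def intro!: exI[of _ 1])
  have up: "\<forall>\<^sub>F t in nhds 0. norm (z t) \<le> (norm u + norm v + 1) * cmod t"
  proof -
    have "\<forall>t. dist t 0 < 1 \<longrightarrow> norm (z t) \<le> (norm u + norm v + 1) * cmod t"
    proof (intro allI impI)
      fix t :: complex assume "dist t 0 < 1"
      then have t1: "cmod t < 1" by (simp add: dist_norm)
      have n1: "norm (z t) \<le> norm (t *s u) + norm (t^2 *s v)" unfolding z_def by (rule norm_triangle_ineq)
      have n2: "norm (t *s u) = cmod t * norm u" by (simp add: norm_vec_def L2_set_right_distrib norm_mult)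
      have n3: "norm (t^2 *s v) = cmod t ^ 2 * norm v" by (simp add: norm_vec_def L2_set_right_distrib norm_mult norm_power)
      have n4: "cmod t ^ 2 * norm v \<le> cmod t * norm v"
      proof -
        have "cmod t * cmod t \<le> 1 * cmod t" using t1 by (intro mult_right_mono) auto
        then have "cmod t ^ 2 \<le> cmod t" by (simp add: power2_eq_square)
        then show ?thesis by (intro mult_right_mono) auto
      qed
      have "norm (z t) \<le> cmod t * norm u + cmod t * norm v" using n1 n2 n3 n4 by linarith
      moreover have "(norm u + norm v + 1) * cmod t = cmod t * norm u + cmod t * norm v + cmod t"
        by (simp add: algebra_simps)
      moreover have "0 \<le> cmod t" by simp
      ultimately show "norm (z t) \<le> (norm u + norm v + 1) * cmod t" by linarith
    qed
    then show ?thesis unfolding eventually_nhds_metric by (intro exI[of _ 1]) auto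
  qed
  have D: "vorder (\<lambda>t. norm (z t - 0)) = enat 1"
  proof (rule den_one[OF assms(4) _ _ up])
    show "0 < norm u + norm v + 1" using norm_ge_zero[of u] norm_ge_zero[of v] by linarith
  qed (use assms(5) in \<open>auto simp: z_def\<close>)
  have Nn: "enat N \<le> vorder (\<lambda>t. r_ex (z t))"
    by (rule vorder_ge[OF assms(6)]) (use assms(7) in \<open>simp add: z_def\<close>)
  have "ereal (real N) \<le> ereal_of_enat (vorder (\<lambda>t. r_ex (z t))) / ereal_of_enat (vorder (\<lambda>t. norm (z t - 0)))"
    by (rule ratio_ge[OF Nn D])
  also have "\<dots> \<le> Delta1_on r_ex S 0"
    unfolding Delta1_on_def using G by (rule SUP_upper)
  finally show ?thesis .
qed

lemma subspace_coord0: "vec.subspace {w::complex^'n::finite. \<forall>k\<in>K. w$k = 0}"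
  unfolding vec.subspace_def by auto

lemma meet2:
  fixes S :: "(complex^4) set"
  assumes "vec.subspace S" "vec.dim S = 3" "p \<noteq> q" "p \<notin> K" "q \<notin> K"
  shows "\<exists>w\<in>S. w \<noteq> 0 \<and> (\<forall>k\<in>K. w$k = 0)"
proof -
  define T where "T = {w::complex^4. \<forall>k\<in>K. w$k = 0}"
  have sT: "vec.subspace T" unfolding T_def by (rule subspace_coord0)
  have B: "{axis p 1, axis q 1} \<subseteq> T" unfolding T_def using assms(4,5) by (auto simp: axis_def)
  have cB: "card {axis p (1::complex), axis q 1} = 2" using assms(3) by (simp add: axis_eq_axis)
  have iB: "vec.independent {axis p (1::complex), axis q 1}"
    by (rule vec.independent_mono[OF independent_cart_basis]) (auto simp: cart_basis_def)
  have dT: "2 \<le> vec.dim T" using vec.independent_card_le_dim[OF B iB] cB by simp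
  have sum: "vec.dim {x + y |x y. x \<in> S \<and> y \<in> T} + vec.dim (S \<inter> T) = vec.dim S + vec.dim T"
    by (rule vec.dim_sums_Int[OF assms(1) sT])
  have "vec.dim {x + y |x y. x \<in> S \<and> y \<in> T} \<le> CARD(4)" by (rule dim_subset_UNIV_cart_gen)
  then have "vec.dim (S \<inter> T) \<ge> 1" using sum dT assms(2) by simp
  then have "\<not> (S \<inter> T \<subseteq> {0})" using vec.dim_eq_0[of "S \<inter> T"] by linarith
  then show ?thesis unfolding T_def by blast
qed

lemma S0_Gr: "{w::complex^4. w$3 = 0} \<in> Gr 3 0"
proof -
  define S0 where "S0 = {w::complex^4. w$3 = 0}"
  have sS: "vec.subspace S0" unfolding S0_def vec.subspace_def by auto
  have B: "{axis 1 1, axis 2 1, axis 4 1} \<subseteq> S0" unfolding S0_def by (auto simp: axis_def)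
  have cB: "card {axis 1 (1::complex), axis 2 1, axis (4::4) 1} = 3" by (simp add: axis_eq_axis)
  have iB: "vec.independent {axis 1 (1::complex), axis 2 1, axis (4::4) 1}"
    by (rule vec.independent_mono[OF independent_cart_basis]) (auto simp: cart_basis_def)
  have d1: "3 \<le> vec.dim S0" using vec.independent_card_le_dim[OF B iB] cB by simp
  have d2: "vec.dim S0 \<le> 4" using dim_subset_UNIV_cart_gen[of S0] by simp
  have d3: "vec.dim S0 \<noteq> 4"
  proof
    assume "vec.dim S0 = 4"
    moreover have "vec.dim (UNIV::(complex^4) set) = 4" using vec_dim_card[where 'a=complex and 'n=4] by simp
    ultimately have "vec.dim (UNIV::(complex^4) set) \<le> vec.dim S0" by simp
    then have "vec.span S0 = vec.span UNIV" by (rule vec.dim_eq_span[rotated]) simp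
    then have "vec.span S0 = UNIV" by simp
    moreover have "vec.span S0 = S0" using sS by simp
    ultimately have "axis 3 1 \<in> S0" by simp
    then show False unfolding S0_def by (simp add: axis_def)
  qed
  have "vec.dim S0 = 3" using d1 d2 d3 by simp
  moreover have "S0 = (\<lambda>v. 0 + v) ` S0" by simp
  ultimately show ?thesis using sS unfolding Gr_def S0_def by blast
qed

lemma Delta1_S0: "Delta1_on r_ex {w::complex^4. w$3 = 0} 0 \<le> 6"
  unfolding Delta1_on_def
proof (rule SUP_least)
  fix z :: "complex \<Rightarrow> complex^4" assume z: "z \<in> Gamma_in {w. w $ 3 = 0} 0"
  then have "\<forall>\<^sub>F t in nhds 0. z t \<in> {w. w $ 3 = 0}" unfolding Gamma_in_def by blast
  then have "\<forall>\<^sub>F t in nhds 0. z t $ 3 = 0" by simp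
  from ub_S0[OF z this] show "ereal_of_enat (vorder (\<lambda>t. r_ex (z t))) / ereal_of_enat (vorder (\<lambda>t. norm (z t - 0))) \<le> 6"
    by simp
qed

lemma Delta1_ge6:
  assumes "S \<in> Gr 3 (0::complex^4)"
  shows "6 \<le> Delta1_on r_ex S 0"
proof -
  obtain V where V: "S = (\<lambda>v. 0 + v) ` V" "vec.subspace V" "vec.dim V = 3"
    using assms unfolding Gr_def by blast
  have SV: "S = V" using V(1) by simp
  obtain w :: "complex^4" where w: "w \<in> S" "w \<noteq> 0" "\<forall>k\<in>{2,4}. w$k = 0"
    using meet2[OF V(2) V(3), of 1 3 "{2,4}"] SV by auto
  obtain i where i: "w $ i \<noteq> 0" using w(2) by (metis vec_eq_iff zero_index)
  have rr: "r_ex (t *s w + t^2 *s 0) = cmod (w$1) ^ 6 * cmod t ^ 6" for t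
    using w(3) by (simp add: r_ex_def norm_mult norm_power power_mult_distrib flip: power_mult)
  have "ereal (real 6) \<le> Delta1_on r_ex S 0"
  proof (rule lb_main[of S w 0 "cmod (w$i)" "cmod (w$1)^6 + 1"])
    show "vec.subspace S" using V(2) SV by simp
    show "w \<in> S" by (rule w(1))
    show "0 \<in> S" using V(2) SV by (simp add: vec.subspace_0)
    show "0 < cmod (w $ i)" using i by simp
    show "\<forall>t. cmod (w $ i) * cmod t \<le> norm (t *s w + t\<^sup>2 *s 0)"
    proof
      fix t :: complex
      have "norm ((t *s w + t\<^sup>2 *s 0) $ i) \<le> norm (t *s w + t\<^sup>2 *s 0)" by (rule Finite_Cartesian_Product.norm_nth_le)
      then show "cmod (w $ i) * cmod t \<le> norm (t *s w + t\<^sup>2 *s 0)" by (simp add: norm_mult mult.commute)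
    qed
    show "0 < cmod (w $ 1) ^ 6 + 1" by (simp add: add_nonneg_pos)
    show "\<forall>\<^sub>F t in nhds 0. \<bar>r_ex (t *s w + t\<^sup>2 *s 0)\<bar> \<le> (cmod (w $ 1) ^ 6 + 1) * cmod t ^ 6"
    proof (intro always_eventually allI)
      fix t :: complex
      have "\<bar>r_ex (t *s w + t\<^sup>2 *s 0)\<bar> = cmod (w $ 1) ^ 6 * cmod t ^ 6" using rr[of t] by simp
      also have "\<dots> \<le> (cmod (w $ 1) ^ 6 + 1) * cmod t ^ 6" by (intro mult_right_mono) auto
      finally show "\<bar>r_ex (t *s w + t\<^sup>2 *s 0)\<bar> \<le> (cmod (w $ 1) ^ 6 + 1) * cmod t ^ 6" .
    qed
  qed
  then show ?thesis by simp
qed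

definition mon :: "nat \<Rightarrow> (nat \<times> 'n \<Rightarrow> nat) \<Rightarrow> (nat \<Rightarrow> complex^'n::finite) \<Rightarrow> complex" where
  "mon d \<alpha> F = (\<Prod>ij\<in>{..<d} \<times> UNIV. (F (fst ij) $ snd ij) ^ \<alpha> ij)"

lemma fp_intro:
  fixes P :: "(nat \<Rightarrow> complex^'n::finite) \<Rightarrow> complex"
  assumes "finite A" "\<forall>\<alpha>\<in>A. \<forall>i j. d \<le> i \<longrightarrow> \<alpha> (i, j) = 0" "\<forall>F. P F = (\<Sum>\<alpha>\<in>A. c \<alpha> * mon d \<alpha> F)"
  shows "frame_poly d P"
proof -
  define c' where "c' \<alpha> = (if \<alpha> \<in> A then c \<alpha> else 0)" for \<alpha>
  have sub: "{\<alpha>. c' \<alpha> \<noteq> 0} \<subseteq> A" unfolding c'_def by auto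
  have fin: "finite {\<alpha>. c' \<alpha> \<noteq> 0}" using sub assms(1) by (rule finite_subset)
  have "P F = (\<Sum>\<alpha>\<in>{\<alpha>. c' \<alpha> \<noteq> 0}. c' \<alpha> * mon d \<alpha> F)" for F
  proof -
    have "(\<Sum>\<alpha>\<in>{\<alpha>. c' \<alpha> \<noteq> 0}. c' \<alpha> * mon d \<alpha> F) = (\<Sum>\<alpha>\<in>A. c' \<alpha> * mon d \<alpha> F)"
      by (rule sum.mono_neutral_left[OF assms(1) sub]) auto
    also have "\<dots> = (\<Sum>\<alpha>\<in>A. c \<alpha> * mon d \<alpha> F)" unfolding c'_def by simp
    finally show ?thesis using assms(3) by simp
  qed
  then show ?thesis unfolding frame_poly_def mon_def using fin sub assms(2)
    by (intro exI[of _ c']) auto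
qed

lemma fp_elim:
  fixes P :: "(nat \<Rightarrow> complex^'n::finite) \<Rightarrow> complex"
  assumes "frame_poly d P"
  obtains c A where "finite A" "\<forall>\<alpha>\<in>A. \<forall>i j. d \<le> i \<longrightarrow> \<alpha> (i, j) = 0" "\<forall>F. P F = (\<Sum>\<alpha>\<in>A. c \<alpha> * mon d \<alpha> F)"
  using assms unfolding frame_poly_def mon_def by blast

lemma fp_const: "frame_poly d (\<lambda>F::nat \<Rightarrow> complex^'n::finite. k)"
  by (rule fp_intro[of "{\<lambda>_. 0}" _ _ "\<lambda>_. k"]) (auto simp: mon_def)

lemma fp_var:
  assumes "i < d"
  shows "frame_poly d (\<lambda>F::nat \<Rightarrow> complex^'n::finite. F i $ j)"
proof (rule fp_intro[of "{\<lambda>ij. if ij = (i, j) then 1 else 0}" _ _ "\<lambda>_. 1"])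
  show "\<forall>\<alpha>\<in>{\<lambda>ij. if ij = (i, j) then 1 else 0}. \<forall>i' j'. d \<le> i' \<longrightarrow> \<alpha> (i', j') = 0"
    using assms by auto
  show "\<forall>F. F i $ j = (\<Sum>\<alpha>\<in>{\<lambda>ij. if ij = (i, j) then 1 else 0}. 1 * mon d \<alpha> F)"
  proof
    fix F :: "nat \<Rightarrow> complex^'n"
    have "mon d (\<lambda>ij. if ij = (i, j) then 1 else 0) F
        = (\<Prod>ij\<in>{..<d} \<times> UNIV. if ij = (i, j) then F (fst ij) $ snd ij else 1)"
      unfolding mon_def by (intro prod.cong) auto
    also have "\<dots> = F i $ j" using assms by (subst prod.delta) auto
    finally show "F i $ j = (\<Sum>\<alpha>\<in>{\<lambda>ij. if ij = (i, j) then 1 else 0}. 1 * mon d \<alpha> F)" by simp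
  qed
qed simp

lemma fp_add:
  assumes "frame_poly d P" "frame_poly d Q"
  shows "frame_poly d (\<lambda>F. P F + Q F)"
proof -
  obtain c1 A1 where 1: "finite A1" "\<forall>\<alpha>\<in>A1. \<forall>i j. d \<le> i \<longrightarrow> \<alpha> (i, j) = 0" "\<forall>F. P F = (\<Sum>\<alpha>\<in>A1. c1 \<alpha> * mon d \<alpha> F)"
    using assms(1) by (rule fp_elim)
  obtain c2 A2 where 2: "finite A2" "\<forall>\<alpha>\<in>A2. \<forall>i j. d \<le> i \<longrightarrow> \<alpha> (i, j) = 0" "\<forall>F. Q F = (\<Sum>\<alpha>\<in>A2. c2 \<alpha> * mon d \<alpha> F)"
    using assms(2) by (rule fp_elim)
  define c where "c \<alpha> = (if \<alpha> \<in> A1 then c1 \<alpha> else 0) + (if \<alpha> \<in> A2 then c2 \<alpha> else 0)" for \<alpha>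
  show ?thesis
  proof (rule fp_intro[of "A1 \<union> A2" _ _ c])
    show "finite (A1 \<union> A2)" using 1 2 by simp
    show "\<forall>\<alpha>\<in>A1 \<union> A2. \<forall>i j. d \<le> i \<longrightarrow> \<alpha> (i, j) = 0" using 1 2 by blast
    show "\<forall>F. P F + Q F = (\<Sum>\<alpha>\<in>A1 \<union> A2. c \<alpha> * mon d \<alpha> F)"
    proof
      fix F
      have "(\<Sum>\<alpha>\<in>A1 \<union> A2. c \<alpha> * mon d \<alpha> F)
          = (\<Sum>\<alpha>\<in>A1 \<union> A2. (if \<alpha> \<in> A1 then c1 \<alpha> * mon d \<alpha> F else 0))
          + (\<Sum>\<alpha>\<in>A1 \<union> A2. (if \<alpha> \<in> A2 then c2 \<alpha> * mon d \<alpha> F else 0))"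
        unfolding c_def sum.distrib[symmetric] by (intro sum.cong refl) (auto simp: distrib_right)
      also have "(\<Sum>\<alpha>\<in>A1 \<union> A2. (if \<alpha> \<in> A1 then c1 \<alpha> * mon d \<alpha> F else 0)) = (\<Sum>\<alpha>\<in>A1. c1 \<alpha> * mon d \<alpha> F)"
        using 1(1) 2(1) by (simp add: sum.inter_restrict[symmetric] Int_absorb1)
      also have "(\<Sum>\<alpha>\<in>A1 \<union> A2. (if \<alpha> \<in> A2 then c2 \<alpha> * mon d \<alpha> F else 0)) = (\<Sum>\<alpha>\<in>A2. c2 \<alpha> * mon d \<alpha> F)"
        using 1(1) 2(1) by (simp add: sum.inter_restrict[symmetric] Int_absorb1)
      finally show "P F + Q F = (\<Sum>\<alpha>\<in>A1 \<union> A2. c \<alpha> * mon d \<alpha> F)" using 1(3) 2(3) by simp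
    qed
  qed
qed

lemma mon_mult: "mon d \<beta> F * mon d \<gamma> F = mon d (\<lambda>ij. \<beta> ij + \<gamma> ij) F"
  unfolding mon_def by (simp add: prod.distrib[symmetric] power_add)

lemma fp_mult:
  assumes "frame_poly d P" "frame_poly d Q"
  shows "frame_poly d (\<lambda>F. P F * Q F)"
proof -
  obtain c1 A1 where 1: "finite A1" "\<forall>\<alpha>\<in>A1. \<forall>i j. d \<le> i \<longrightarrow> \<alpha> (i, j) = 0" "\<forall>F. P F = (\<Sum>\<alpha>\<in>A1. c1 \<alpha> * mon d \<alpha> F)"
    using assms(1) by (rule fp_elim)
  obtain c2 A2 where 2: "finite A2" "\<forall>\<alpha>\<in>A2. \<forall>i j. d \<le> i \<longrightarrow> \<alpha> (i, j) = 0" "\<forall>F. Q F = (\<Sum>\<alpha>\<in>A2. c2 \<alpha> * mon d \<alpha> F)"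
    using assms(2) by (rule fp_elim)
  define pl where "pl = (\<lambda>(\<beta>::nat \<times> 'a \<Rightarrow> nat, \<gamma>::nat \<times> 'a \<Rightarrow> nat). (\<lambda>ij. \<beta> ij + \<gamma> ij))"
  define A where "A = pl ` (A1 \<times> A2)"
  define h where "h = (\<lambda>(\<beta>, \<gamma>). c1 \<beta> * c2 \<gamma>)"
  define c where "c \<alpha> = (\<Sum>p\<in>{p \<in> A1 \<times> A2. pl p = \<alpha>}. h p)" for \<alpha>
  have finA12: "finite (A1 \<times> A2)" using 1(1) 2(1) by simp
  show ?thesis
  proof (rule fp_intro[of A _ _ c])
    show "finite A" unfolding A_def by (rule finite_imageI[OF finA12])
    show "\<forall>\<alpha>\<in>A. \<forall>i j. d \<le> i \<longrightarrow> \<alpha> (i, j) = 0" unfolding A_def pl_def using 1(2) 2(2) by auto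
    show "\<forall>F. P F * Q F = (\<Sum>\<alpha>\<in>A. c \<alpha> * mon d \<alpha> F)"
    proof
      fix F
      have "P F * Q F = (\<Sum>\<beta>\<in>A1. \<Sum>\<gamma>\<in>A2. (c1 \<beta> * mon d \<beta> F) * (c2 \<gamma> * mon d \<gamma> F))"
        using 1(3) 2(3) by (simp add: sum_product)
      also have "\<dots> = (\<Sum>p\<in>A1 \<times> A2. h p * mon d (pl p) F)"
        unfolding sum.cartesian_product h_def pl_def
        by (intro sum.cong refl) (auto simp: mon_mult[symmetric] algebra_simps)
      also have "\<dots> = (\<Sum>\<alpha>\<in>A. \<Sum>p\<in>{p \<in> A1 \<times> A2. pl p = \<alpha>}. h p * mon d (pl p) F)"
        unfolding A_def by (rule sum.group[symmetric, OF finA12 finite_imageI[OF finA12]]) auto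
      also have "\<dots> = (\<Sum>\<alpha>\<in>A. c \<alpha> * mon d \<alpha> F)"
        unfolding c_def sum_distrib_right by (intro sum.cong refl) auto
      finally show "P F * Q F = (\<Sum>\<alpha>\<in>A. c \<alpha> * mon d \<alpha> F)" .
    qed
  qed
qed

lemma fp_diff:
  assumes "frame_poly d P" "frame_poly d Q"
  shows "frame_poly d (\<lambda>F. P F - Q F)"
proof -
  have "frame_poly d (\<lambda>F. P F + (-1) * Q F)"
    by (intro fp_add fp_mult fp_const assms)
  then show ?thesis by simp
qed

definition d3 :: "complex \<Rightarrow> complex \<Rightarrow> complex \<Rightarrow> complex \<Rightarrow> complex \<Rightarrow> complex \<Rightarrow> complex \<Rightarrow> complex \<Rightarrow> complex \<Rightarrow> complex" where
  "d3 a b c d e f g h i = a * (e * i - f * h) - b * (d * i - f * g) + c * (d * h - e * g)"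

definition Mn :: "4 \<Rightarrow> 4 \<Rightarrow> 4 \<Rightarrow> (nat \<Rightarrow> complex^4) \<Rightarrow> complex" where
  "Mn j k l F = d3 (F 0 $ j) (F 0 $ k) (F 0 $ l) (F 1 $ j) (F 1 $ k) (F 1 $ l) (F 2 $ j) (F 2 $ k) (F 2 $ l)"

definition Pgen :: "(nat \<Rightarrow> complex^4) \<Rightarrow> complex" where
  "Pgen F = Mn 2 3 4 F * Mn 1 2 4 F"

lemma normal_rows:
  assumes "i < 3"
  shows "Mn 2 3 4 F * F i $ 1 + (- Mn 1 3 4 F) * F i $ 2 + Mn 1 2 4 F * F i $ 3 + (- Mn 1 2 3 F) * F i $ 4 = 0"
proof -
  have "i = 0 \<or> i = 1 \<or> i = 2" using assms by auto
  then show ?thesis unfolding Mn_def d3_def by (elim disjE) (simp_all add: algebra_simps)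
qed

lemma fp_Pgen: "frame_poly 3 Pgen"
  unfolding Pgen_def[abs_def] Mn_def d3_def
  by (intro fp_mult fp_add fp_diff fp_var) simp_all

lemma Pgen_nonzero: "\<exists>F. Pgen F \<noteq> 0"
proof
  define F :: "nat \<Rightarrow> complex^4" where
    "F = (\<lambda>i. if i = 0 then axis 1 1 + axis 3 1 else if i = 1 then axis 2 1 else axis 4 1)"
  show "Pgen F \<noteq> 0" unfolding Pgen_def Mn_def d3_def F_def by (simp add: axis_def)
qed

lemma r_ex_curve:
  fixes u v :: "complex^4"
  assumes "u$1 = 1" "u$2 = 0" "u$3 = \<alpha>" "u$4 = 0" "v$1 = 0" "v$2 = c" "v$3 = \<gamma>" "v$4 = 0" "\<alpha> * c = 1"
  shows "r_ex (t *s u + t^2 *s v) = (cmod (\<gamma> * c)^2 + cmod c ^ 4) * cmod t ^ 8"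
proof -
  have f: "t^3 - (t * \<alpha> + t^2 * \<gamma>) * (t^2 * c) = - (\<gamma> * c) * t^4"
  proof -
    have "t^3 - (t * \<alpha> + t^2 * \<gamma>) * (t^2 * c) = t^3 * (1 - \<alpha> * c) - (\<gamma> * c) * t^4"
      by (simp add: algebra_simps power2_eq_square power3_eq_cube power4_eq_xxxx)
    then show ?thesis using assms(9) by simp
  qed
  have "r_ex (t *s u + t^2 *s v) = cmod (t^3 - (t * \<alpha> + t^2 * \<gamma>) * (t^2 * c))^2 + cmod (t^2 * c)^4"
    unfolding r_ex_def using assms(1-8) by simp
  also have "\<dots> = (cmod (\<gamma> * c)^2 + cmod c ^ 4) * cmod t ^ 8"
    unfolding f by (simp add: norm_mult norm_power power_mult_distrib algebra_simps flip: power_mult)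
  finally show ?thesis .
qed

lemma generic_val:
  assumes P: "Pgen F \<noteq> 0" and inj: "inj_on F {..<3}" and ind: "vec.independent (F ` {..<3})"
  shows "Delta1_on r_ex ((\<lambda>v. 0 + v) ` vec.span (F ` {..<3})) 0 = 8"
proof -
  define S where "S = vec.span (F ` {..<3})"
  have SS: "(\<lambda>v. 0 + v) ` vec.span (F ` {..<3}) = S" unfolding S_def by simp
  define a1 where "a1 = Mn 2 3 4 F"
  define a2 where "a2 = - Mn 1 3 4 F"
  define a3 where "a3 = Mn 1 2 4 F"
  define a4 where "a4 = - Mn 1 2 3 F"
  have a1: "a1 \<noteq> 0" and a3: "a3 \<noteq> 0" using P unfolding Pgen_def a1_def a3_def by auto
  have sS: "vec.subspace S" unfolding S_def by simp
  have dS: "vec.dim S = 3"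
  proof -
    have "vec.dim S = card (F ` {..<3})" unfolding S_def by (rule vec.dim_span_eq_card_independent[OF ind])
    also have "\<dots> = 3" using card_image[OF inj] by simp
    finally show ?thesis .
  qed
  define H where "H = {w::complex^4. a1 * w$1 + a2 * w$2 + a3 * w$3 + a4 * w$4 = 0}"
  have sH: "vec.subspace H" unfolding vec.subspace_def
  proof (intro conjI ballI allI)
    show "0 \<in> H" unfolding H_def by simp
  next
    fix x y assume "x \<in> H" "y \<in> H"
    then have e: "a1 * x$1 + a2 * x$2 + a3 * x$3 + a4 * x$4 = 0" "a1 * y$1 + a2 * y$2 + a3 * y$3 + a4 * y$4 = 0"
      unfolding H_def by auto
    have "a1 * (x+y)$1 + a2 * (x+y)$2 + a3 * (x+y)$3 + a4 * (x+y)$4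
      = (a1 * x$1 + a2 * x$2 + a3 * x$3 + a4 * x$4) + (a1 * y$1 + a2 * y$2 + a3 * y$3 + a4 * y$4)"
      by (simp add: algebra_simps)
    then show "x + y \<in> H" unfolding H_def using e by simp
  next
    fix k :: complex and x assume "x \<in> H"
    then have e: "a1 * x$1 + a2 * x$2 + a3 * x$3 + a4 * x$4 = 0" unfolding H_def by auto
    have "a1 * (k *s x)$1 + a2 * (k *s x)$2 + a3 * (k *s x)$3 + a4 * (k *s x)$4
      = k * (a1 * x$1 + a2 * x$2 + a3 * x$3 + a4 * x$4)"
      by (simp add: algebra_simps)
    then show "k *s x \<in> H" unfolding H_def using e by simp
  qed
  have FH: "F ` {..<3} \<subseteq> H" unfolding H_def a1_def a2_def a3_def a4_def using normal_rows by auto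
  have SH: "S \<subseteq> H" unfolding S_def by (rule vec.span_minimal[OF FH sH])
  have up: "Delta1_on r_ex S 0 \<le> 8"
    unfolding Delta1_on_def
  proof (rule SUP_least)
    fix z :: "complex \<Rightarrow> complex^4" assume z: "z \<in> Gamma_in S 0"
    then have "\<forall>\<^sub>F t in nhds 0. z t \<in> S" unfolding Gamma_in_def by blast
    then have "\<forall>\<^sub>F t in nhds 0. a1 * z t $ 1 + a2 * z t $ 2 + a3 * z t $ 3 + a4 * z t $ 4 = 0"
      by (rule eventually_mono) (use SH in \<open>auto simp: H_def\<close>)
    from ub_gen[OF z this a1 a3]
    show "ereal_of_enat (vorder (\<lambda>t. r_ex (z t))) / ereal_of_enat (vorder (\<lambda>t. norm (z t - 0))) \<le> 8"
      by simp
  qed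
  obtain w :: "complex^4" where w: "w \<in> S" "w \<noteq> 0" "\<forall>k\<in>{2,4}. w$k = 0"
    using meet2[OF sS dS, of 1 3 "{2,4}"] by auto
  have wH: "a1 * w$1 + a3 * w$3 = 0" using SH w(1) w(3) unfolding H_def by auto
  have w1: "w$1 \<noteq> 0"
  proof
    assume "w$1 = 0"
    then have "w$3 = 0" using wH a3 by simp
    then have "w = 0" using \<open>w$1 = 0\<close> w(3) by (simp add: vec_eq_iff forall_4)
    with w(2) show False by simp
  qed
  have w3: "w$3 \<noteq> 0" using wH a1 w1 by auto
  obtain w' :: "complex^4" where w': "w' \<in> S" "w' \<noteq> 0" "\<forall>k\<in>{1,4}. w'$k = 0"
    using meet2[OF sS dS, of 2 3 "{1,4}"] by auto
  have wH': "a2 * w'$2 + a3 * w'$3 = 0" using SH w'(1) w'(3) unfolding H_def by auto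
  have w2': "w'$2 \<noteq> 0"
  proof
    assume "w'$2 = 0"
    then have "w'$3 = 0" using wH' a3 by simp
    then have "w' = 0" using \<open>w'$2 = 0\<close> w'(3) by (simp add: vec_eq_iff forall_4)
    with w'(2) show False by simp
  qed
  define \<alpha> where "\<alpha> = w$3 / w$1"
  define c where "c = 1 / \<alpha>"
  define u where "u = (1 / w$1) *s w"
  define v where "v = (c / w'$2) *s w'"
  have al: "\<alpha> * c = 1" unfolding c_def \<alpha>_def using w1 w3 by simp
  have uS: "u \<in> S" unfolding u_def using sS w(1) by (rule vec.subspace_scale)
  have vS: "v \<in> S" unfolding v_def using sS w'(1) by (rule vec.subspace_scale)
  have uc: "u$1 = 1" "u$2 = 0" "u$3 = \<alpha>" "u$4 = 0" unfolding u_def \<alpha>_def using w1 w(3) by auto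
  have vc: "v$1 = 0" "v$2 = c" "v$3 = c / w'$2 * w'$3" "v$4 = 0" unfolding v_def using w2' w'(3) by auto
  have rr: "r_ex (t *s u + t^2 *s v) = (cmod (c / w'$2 * w'$3 * c)^2 + cmod c ^ 4) * cmod t ^ 8" for t
    by (rule r_ex_curve[OF uc vc al])
  define C where "C = cmod (c / w'$2 * w'$3 * c)^2 + cmod c ^ 4 + 1"
  have Cpos: "C > 0" unfolding C_def by (simp add: add_nonneg_pos)
  have "ereal (real 8) \<le> Delta1_on r_ex S 0"
  proof (rule lb_main[OF sS uS vS zero_less_one _ Cpos])
    show "\<forall>t. 1 * cmod t \<le> norm (t *s u + t\<^sup>2 *s v)"
    proof
      fix t :: complex
      have "norm ((t *s u + t\<^sup>2 *s v) $ 1) \<le> norm (t *s u + t\<^sup>2 *s v)"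
        by (rule Finite_Cartesian_Product.norm_nth_le)
      then show "1 * cmod t \<le> norm (t *s u + t\<^sup>2 *s v)" using uc vc by simp
    qed
    show "\<forall>\<^sub>F t in nhds 0. \<bar>r_ex (t *s u + t\<^sup>2 *s v)\<bar> \<le> C * cmod t ^ 8"
    proof (intro always_eventually allI)
      fix t :: complex
      have "\<bar>r_ex (t *s u + t\<^sup>2 *s v)\<bar> = (cmod (c / w'$2 * w'$3 * c)^2 + cmod c ^ 4) * cmod t ^ 8"
        using rr[of t] by simp
      also have "\<dots> \<le> C * cmod t ^ 8" unfolding C_def by (intro mult_right_mono) auto
      finally show "\<bar>r_ex (t *s u + t\<^sup>2 *s v)\<bar> \<le> C * cmod t ^ 8" .
    qed
  qed
  then have "8 \<le> Delta1_on r_ex S 0" by simp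
  with up show ?thesis unfolding SS by simp
qed

theorem mainTheorem10:
  shows "Delta 2 r_ex 0 = 6
       \<and> generic_value_is 3 (0::complex^4) (\<lambda>S. Delta1_on r_ex S 0) 8
       \<and> Delta 2 r_ex 0 < 8"
proof -
  have D: "Delta 2 r_ex (0::complex^4) = 6"
  proof -
    have "Delta 2 r_ex (0::complex^4) = (INF S \<in> Gr 3 0. Delta1_on r_ex S 0)" unfolding Delta_def by simp
    also have "\<dots> = 6"
    proof (rule antisym)
      show "(INF S\<in>Gr 3 0. Delta1_on r_ex S 0) \<le> 6" by (rule INF_lower2[OF S0_Gr]) (rule Delta1_S0)
      show "6 \<le> (INF S\<in>Gr 3 0. Delta1_on r_ex S 0)" by (rule INF_greatest) (rule Delta1_ge6)
    qed
    finally show ?thesis .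
  qed
  have G: "generic_value_is 3 (0::complex^4) (\<lambda>S. Delta1_on r_ex S 0) 8"
    unfolding generic_value_is_def holds_generically_def
    using fp_Pgen Pgen_nonzero generic_val by blast
  show ?thesis using D G by simp
qed

end
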